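(* Assume $m=2$, i.e. $\Theta=\{\theta_1,\theta_2\}$, and let $\varphi\in\Delta_1^2$. If there exists $f\in\mathcal{W}^\varphi$ with $f\in\mathcal{F}_{\mathrm{inf}}$, then for every $\widehat f\in\mathcal{W}^\varphi$, $\varphi$ is the unique $\psi\in\Delta_1^2$ satisfying $$\sum_{s=1}^2\big(C^{\theta_s}_p(\widehat f)-C^{\theta_s}_r(\widehat f)\big)\psi_s=0\ \text{ for all } p,r \text{ with } \widehat f_p,\widehat f_r>0,$$ $$\sum_{s=1}^2\big(C^{\theta_s}_p(\widehat f)-C^{\theta_s}_r(\widehat f)\big)\psi_s\le0\ \text{ for all } p,r \text{ with } \widehat f_p>0,\ \widehat f_r=0.$$
   Context: Let $\mathcal{G}=(\mathcal{V},\mathcal{E})$ be a finite directed graph with an origin $v_o$ and a destination $v_d$, and let $\mathcal{P}$ be the (finite) set of acyclic directed paths from $v_o$ to $v_d$, $n=|\mathcal{P}|$. The set of feasible path-flows is $\mathcal{H}=\{f\in\mathbb{R}^n_{\ge0}:\sum_{p\in\mathcal{P}}f_p=1\}$. For a path-flow $f$, the flow on edge $e_k$ is $f_{e_k}=\sum_{p\ni e_k}f_p$. There is a finite set of states $\Theta=\{\theta_1,\dots,\theta_m\}$; in each state $\theta_s$ each edge $e_k$ has a known cost function $C^{\theta_s}_{e_k}:\mathbb{R}_{\ge0}\to\mathbb{R}_{\ge0}$ that is continuous and strictly increasing. The cost of path $p$ in state $\theta_s$ is $C^{\theta_s}_p(f)=\sum_{e_k\in p}C^{\theta_s}_{e_k}(f_{e_k})$.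 For $\varphi\in\Delta_1^m:=\{x\in\mathbb{R}^m_{\ge0}:\sum_i x_i=1\}$ the expected cost of path $p$ is $C^\varphi_p(f)=\sum_{s}\varphi_sC^{\theta_s}_p(f)$. A flow $f\in\mathcal{H}$ is a $\varphi$-based Wardrop equilibrium ($\varphi$-WE) if for all $p$ with $f_p>0$ we have $C^\varphi_p(f)\le C^\varphi_r(f)$ for all $r\in\mathcal{P}$; $\mathcal{W}^\varphi$ denotes the set of $\varphi$-WE. For each $s$, $\varphi^{\theta_s}\in\Delta_1^m$ is the distribution with $\varphi^{\theta_s}_s=1$, and $\mathcal{W}^{\theta_s}:=\mathcal{W}^{\varphi^{\theta_s}}$. For $\varphi\in\Delta_1^m$, $\mathcal{R}^{\mathrm{use}}_\varphi=\{p\in\mathcal{P}:\exists f\in\mathcal{W}^\varphi,\ f_p>0\}$. In the two-state case, the set of informative flows is $$\mathcal{F}_{\mathrm{inf}}=\{f\in\mathcal{H}: f\notin\mathcal{W}^{\theta_1}\cup\mathcal{W}^{\theta_2},\ f_p>0\ \text{for all } p\in\mathcal{R}^{\mathrm{use}}_{\varphi^{\theta_1}}\}.$$ *)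

theory Defs
  imports "HOL-Analysis.Analysis"
begin

definition od_paths :: "('v \<times> 'v) set \<Rightarrow> 'v \<Rightarrow> 'v \<Rightarrow> 'v list set" where
  "od_paths E vo vd = {p. p \<noteq> [] \<and> hd p = vo \<and> last p = vd \<and> distinct p \<and>
      (\<forall>i. Suc i < length p \<longrightarrow> (p ! i, p ! Suc i) \<in> E)}"

definition path_edges :: "'v list \<Rightarrow> ('v \<times> 'v) set" where
  "path_edges p = set (zip p (tl p))"

definition feasible_flows :: "'v list set \<Rightarrow> ('v list \<Rightarrow> real) set" where
  "feasible_flows P = {f. (\<forall>p\<in>P. f p \<ge> 0) \<and> (\<forall>p. p \<notin> P \<longrightarrow> f p = 0) \<and> sum f P = 1}"

definition edge_flow :: "'v list set \<Rightarrow> ('v list \<Rightarrow> real) \<Rightarrow> ('v \<times> 'v) \<Rightarrow> real" where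
  "edge_flow P f e = (\<Sum>p\<in>{p\<in>P. e \<in> path_edges p}. f p)"

definition path_cost ::
  "(nat \<Rightarrow> ('v \<times> 'v) \<Rightarrow> real \<Rightarrow> real) \<Rightarrow> nat \<Rightarrow> 'v list set \<Rightarrow> ('v list \<Rightarrow> real) \<Rightarrow> 'v list \<Rightarrow> real" where
  "path_cost C s P f p = (\<Sum>e\<in>path_edges p. C s e (edge_flow P f e))"

text \<open>States are indexed by 1..m; distributions are vanishing outside 1..m.\<close>
definition prob_simplex :: "nat \<Rightarrow> (nat \<Rightarrow> real) set" where
  "prob_simplex m = {\<phi>. (\<forall>s\<in>{1..m}. \<phi> s \<ge> 0) \<and> (\<forall>s. s \<notin> {1..m} \<longrightarrow> \<phi> s = 0)
      \<and> (\<Sum>s=1..m. \<phi> s) = 1}"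

definition point_dist :: "nat \<Rightarrow> (nat \<Rightarrow> real)" where
  "point_dist s = (\<lambda>i. if i = s then 1 else 0)"

definition exp_cost ::
  "nat \<Rightarrow> (nat \<Rightarrow> ('v \<times> 'v) \<Rightarrow> real \<Rightarrow> real) \<Rightarrow> (nat \<Rightarrow> real) \<Rightarrow> 'v list set \<Rightarrow> ('v list \<Rightarrow> real) \<Rightarrow> 'v list \<Rightarrow> real" where
  "exp_cost m C \<phi> P f p = (\<Sum>s=1..m. \<phi> s * path_cost C s P f p)"

definition wardrop_eq ::
  "nat \<Rightarrow> (nat \<Rightarrow> ('v \<times> 'v) \<Rightarrow> real \<Rightarrow> real) \<Rightarrow> 'v list set \<Rightarrow> (nat \<Rightarrow> real) \<Rightarrow> ('v list \<Rightarrow> real) set" where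
  "wardrop_eq m C P \<phi> = {f \<in> feasible_flows P. \<forall>p\<in>P. f p > 0 \<longrightarrow>
      (\<forall>r\<in>P. exp_cost m C \<phi> P f p \<le> exp_cost m C \<phi> P f r)}"

definition used_routes ::
  "nat \<Rightarrow> (nat \<Rightarrow> ('v \<times> 'v) \<Rightarrow> real \<Rightarrow> real) \<Rightarrow> 'v list set \<Rightarrow> (nat \<Rightarrow> real) \<Rightarrow> 'v list set" where
  "used_routes m C P \<phi> = {p\<in>P. \<exists>f\<in>wardrop_eq m C P \<phi>. f p > 0}"

definition informative_flows ::
  "(nat \<Rightarrow> ('v \<times> 'v) \<Rightarrow> real \<Rightarrow> real) \<Rightarrow> 'v list set \<Rightarrow> ('v list \<Rightarrow> real) set" where
  "informative_flows C P = {f \<in> feasible_flows P.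
      f \<notin> wardrop_eq 2 C P (point_dist 1) \<union> wardrop_eq 2 C P (point_dist 2) \<and>
      (\<forall>p\<in>used_routes 2 C P (point_dist 1). f p > 0)}"

end

theory Submission
  imports Defs
begin


lemma sum12: "(\<Sum>s=1..2::nat. f s) = (f 1 + f 2 :: real)"
  by (simp add: numeral_2_eq_2)

lemma simplex2:
  assumes "w \<in> prob_simplex 2"
  shows "w 1 \<ge> 0" "w 2 \<ge> 0" "w 1 + w 2 = 1" "\<And>s. s \<noteq> 1 \<Longrightarrow> s \<noteq> 2 \<Longrightarrow> w s = 0"
  using assms unfolding prob_simplex_def sum12 by auto

lemma simplex2_neq:
  assumes "w \<in> prob_simplex 2" "\<psi> \<in> prob_simplex 2" "w \<noteq> \<psi>"
  shows "w 1 \<noteq> \<psi> 1"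
proof
  assume h: "w 1 = \<psi> 1"
  have "w s = \<psi> s" for s
    using simplex2[OF assms(1)] simplex2[OF assms(2)] h
    by (cases "s = 1"; cases "s = 2") auto
  then show False using assms(3) by auto
qed

lemma point_dist1: "point_dist 1 \<in> prob_simplex 2"
  unfolding prob_simplex_def point_dist_def sum12 by auto

lemma exp_cost2: "exp_cost 2 C w P f p = w 1 * path_cost C 1 P f p + w 2 * path_cost C 2 P f p"
  unfolding exp_cost_def sum12 ..

lemma exp_cost_pd1: "exp_cost 2 C (point_dist 1) P f p = path_cost C 1 P f p"
  by (simp add: exp_cost2 point_dist_def)

lemma od_paths_edges:
  assumes "p \<in> od_paths E vo vd" shows "path_edges p \<subseteq> E"
proof
  fix x assume "x \<in> path_edges p"
  then obtain n where n: "p ! n = fst x" "tl p ! n = snd x" "n < length p" "n < length (tl p)"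
    unfolding path_edges_def in_set_zip by blast
  then have "Suc n < length p" by auto
  moreover have "tl p ! n = p ! Suc n" using n by (simp add: nth_tl)
  ultimately show "x \<in> E" using assms n unfolding od_paths_def by (cases x) auto
qed

lemma finite_path_edges: "finite (path_edges p)"
  by (simp add: path_edges_def)

lemma pairing:
  assumes "finite P" "\<And>p. p\<in>P \<Longrightarrow> path_edges p \<subseteq> E" "finite E"
  shows "(\<Sum>p\<in>P. g p * (\<Sum>e\<in>path_edges p. a e)) = (\<Sum>e\<in>E. a e * edge_flow P g e)"
proof -
  have "(\<Sum>p\<in>P. g p * (\<Sum>e\<in>path_edges p. a e)) = (\<Sum>p\<in>P. \<Sum>e\<in>{e. e \<in> E \<and> e \<in> path_edges p}. g p * a e)"
  proof (rule sum.cong[OF refl])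
    fix p assume "p \<in> P"
    then have "{e. e \<in> E \<and> e \<in> path_edges p} = path_edges p" using assms(2) by auto
    then show "g p * (\<Sum>e\<in>path_edges p. a e) = (\<Sum>e\<in>{e. e \<in> E \<and> e \<in> path_edges p}. g p * a e)"
      by (simp add: sum_distrib_left)
  qed
  also have "\<dots> = (\<Sum>e\<in>E. \<Sum>p\<in>{p. p \<in> P \<and> e \<in> path_edges p}. g p * a e)"
    by (rule sum.swap_restrict) (use assms in auto)
  also have "\<dots> = (\<Sum>e\<in>E. a e * edge_flow P g e)"
    by (simp add: edge_flow_def sum_distrib_left mult.commute)
  finally show ?thesis .
qed

lemma sum_expand:
  "(\<Sum>p\<in>P. (g p - h p) * (a p - b p)) = (\<Sum>p\<in>P. g p * a p) - (\<Sum>p\<in>P. h p * a p) - ((\<Sum>p\<in>P. g p * b p) - (\<Sum>p\<in>P. h p * b p :: real))"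
  by (simp add: algebra_simps sum_subtractf sum.distrib)

lemma feasible_pos:
  assumes "g \<in> feasible_flows P" obtains p where "p \<in> P" "g p > 0"
proof -
  have "\<exists>p\<in>P. g p > 0"
  proof (rule ccontr)
    assume "\<not> ?thesis"
    then have "\<forall>p\<in>P. g p = 0" using assms by (force simp: feasible_flows_def)
    then have "sum g P = 0" by simp
    then show False using assms by (simp add: feasible_flows_def)
  qed
  then show ?thesis using that by blast
qed

lemma feasible_finite: "g \<in> feasible_flows P \<Longrightarrow> finite P"
  by (auto simp: feasible_flows_def intro: ccontr)

lemma edge_flow_bounds:
  assumes "g \<in> feasible_flows P"
  shows "0 \<le> edge_flow P g e" "edge_flow P g e \<le> 1"
proof -
  have fin: "finite P" using feasible_finite[OF assms] .
  have nn: "\<And>p. p \<in> P \<Longrightarrow> g p \<ge> 0" using assms by (auto simp: feasible_flows_def)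
  show "0 \<le> edge_flow P g e" unfolding edge_flow_def by (rule sum_nonneg) (use nn in auto)
  have "edge_flow P g e \<le> sum g P" unfolding edge_flow_def
    by (rule sum_mono2) (use fin nn in auto)
  then show "edge_flow P g e \<le> 1" using assms by (simp add: feasible_flows_def)
qed

lemma we_ineq:
  assumes g: "g \<in> wardrop_eq 2 C P w" and h: "h \<in> feasible_flows P"
  shows "(\<Sum>p\<in>P. g p * exp_cost 2 C w P g p) \<le> (\<Sum>p\<in>P. h p * exp_cost 2 C w P g p)"
proof -
  have gf: "g \<in> feasible_flows P" and gw: "\<And>p r. p\<in>P \<Longrightarrow> g p > 0 \<Longrightarrow> r \<in> P \<Longrightarrow> exp_cost 2 C w P g p \<le> exp_cost 2 C w P g r"
    using g by (auto simp: wardrop_eq_def)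
  obtain p0 where p0: "p0 \<in> P" "g p0 > 0" using feasible_pos[OF gf] .
  define \<mu> where "\<mu> = exp_cost 2 C w P g p0"
  have "(\<Sum>p\<in>P. g p * exp_cost 2 C w P g p) = (\<Sum>p\<in>P. g p * \<mu>)"
  proof (rule sum.cong[OF refl])
    fix p assume p: "p \<in> P"
    show "g p * exp_cost 2 C w P g p = g p * \<mu>"
    proof (cases "g p > 0")
      case True
      then show ?thesis using gw[OF p True p0(1)] gw[OF p0 p] by (simp add: \<mu>_def)
    next
      case False
      then have "g p = 0" using gf p by (force simp: feasible_flows_def)
      then show ?thesis by simp
    qed
  qed
  also have "\<dots> = \<mu>" using gf by (simp add: feasible_flows_def sum_distrib_right[symmetric])
  also have "\<dots> = (\<Sum>p\<in>P. h p * \<mu>)" using h by (simp add: feasible_flows_def sum_distrib_right[symmetric])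
  also have "\<dots> \<le> (\<Sum>p\<in>P. h p * exp_cost 2 C w P g p)"
    by (rule sum_mono, rule mult_left_mono) (use gw[OF p0] \<mu>_def h in \<open>auto simp: feasible_flows_def\<close>)
  finally show ?thesis .
qed

lemma pc_eq:
  assumes "\<forall>e\<in>E. edge_flow P g e = edge_flow P h e" "path_edges p \<subseteq> E"
  shows "path_cost C s P g p = path_cost C s P h p"
  unfolding path_cost_def by (rule sum.cong) (use assms in auto)



lemma mix_mono:
  assumes "w 1 \<ge> 0" "w 2 \<ge> 0" "w 1 + w 2 = (1::real)"
    and m1: "strict_mono_on {0..} (c1 :: real \<Rightarrow> real)" and m2: "strict_mono_on {0..} c2"
    and y: "y \<ge> 0" and z: "z \<ge> 0"
  shows "((w 1 * c1 z + w 2 * c2 z) - (w 1 * c1 y + w 2 * c2 y)) * (z - y) \<ge> 0"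
    and "((w 1 * c1 z + w 2 * c2 z) - (w 1 * c1 y + w 2 * c2 y)) * (z - y) = 0 \<Longrightarrow> z = y"
proof -
  have key: "(w 1 * c1 b + w 2 * c2 b) - (w 1 * c1 a + w 2 * c2 a) > 0" if "a \<ge> 0" "b \<ge> 0" "a < b" for a b
  proof -
    have d1: "c1 a < c1 b" using strict_mono_onD[OF m1] that by auto
    have d2: "c2 a < c2 b" using strict_mono_onD[OF m2] that by auto
    have "w 1 > 0 \<or> w 2 > 0" using assms(1-3) by auto
    then show ?thesis
    proof
      assume "w 1 > 0"
      then have "w 1 * (c1 b - c1 a) > 0" using d1 by simp
      moreover have "w 2 * (c2 b - c2 a) \<ge> 0" using d2 assms(2) by simp
      ultimately show ?thesis by (simp add: algebra_simps)
    next
      assume "w 2 > 0"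
      then have "w 2 * (c2 b - c2 a) > 0" using d2 by simp
      moreover have "w 1 * (c1 b - c1 a) \<ge> 0" using d1 assms(1) by simp
      ultimately show ?thesis by (simp add: algebra_simps)
    qed
  qed
  consider "y < z" | "y = z" | "z < y" by linarith
  then have "((w 1 * c1 z + w 2 * c2 z) - (w 1 * c1 y + w 2 * c2 y)) * (z - y) > 0 \<or> z = y"
  proof cases
    case 1 then show ?thesis using key[OF y z 1] by simp
  next
    case 3
    have "((w 1 * c1 z + w 2 * c2 z) - (w 1 * c1 y + w 2 * c2 y)) * (z - y) =
       ((w 1 * c1 y + w 2 * c2 y) - (w 1 * c1 z + w 2 * c2 z)) * (y - z)" by (simp add: algebra_simps)
    then show ?thesis using key[OF z y 3] 3 by simp
  qed simp
  then show "((w 1 * c1 z + w 2 * c2 z) - (w 1 * c1 y + w 2 * c2 y)) * (z - y) \<ge> 0"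
    and "((w 1 * c1 z + w 2 * c2 z) - (w 1 * c1 y + w 2 * c2 y)) * (z - y) = 0 \<Longrightarrow> z = y"
    by auto
qed

lemma exp_cost_edges:
  "exp_cost 2 C w P g p = (\<Sum>e\<in>path_edges p. w 1 * C 1 e (edge_flow P g e) + w 2 * C 2 e (edge_flow P g e))"
  unfolding exp_cost2 path_cost_def by (simp add: sum_distrib_left sum.distrib)

lemma uniq:
  assumes finP: "finite P" and subE: "\<And>p. p\<in>P \<Longrightarrow> path_edges p \<subseteq> E" and finE: "finite E"
    and incr: "\<And>s e. s \<in> {1..2} \<Longrightarrow> e \<in> E \<Longrightarrow> strict_mono_on {0..} (C s e)"
    and w: "w \<in> prob_simplex 2" and g: "g \<in> feasible_flows P" and h: "h \<in> feasible_flows P"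
    and le: "(\<Sum>p\<in>P. (g p - h p) * (exp_cost 2 C w P g p - exp_cost 2 C w P h p)) \<le> 0"
  shows "\<forall>e\<in>E. edge_flow P g e = edge_flow P h e"
proof -
  define ec where "ec e y = w 1 * C 1 e y + w 2 * C 2 e y" for e y
  define a where "a e = ec e (edge_flow P g e) - ec e (edge_flow P h e)" for e
  have "(\<Sum>p\<in>P. (g p - h p) * (exp_cost 2 C w P g p - exp_cost 2 C w P h p))
      = (\<Sum>p\<in>P. (g p - h p) * (\<Sum>e\<in>path_edges p. a e))"
    unfolding exp_cost_edges a_def ec_def by (simp add: sum_subtractf)
  also have "\<dots> = (\<Sum>e\<in>E. a e * edge_flow P (\<lambda>p. g p - h p) e)"
    by (rule pairing[OF finP subE finE])
  also have "\<dots> = (\<Sum>e\<in>E. a e * (edge_flow P g e - edge_flow P h e))"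
    by (simp add: edge_flow_def sum_subtractf)
  finally have S: "(\<Sum>e\<in>E. a e * (edge_flow P g e - edge_flow P h e)) \<le> 0" using le by simp
  have w12: "w 1 \<ge> 0" "w 2 \<ge> 0" "w 1 + w 2 = 1" using simplex2[OF w] by auto
  have nn: "a e * (edge_flow P g e - edge_flow P h e) \<ge> 0" if "e \<in> E" for e
    unfolding a_def ec_def
    by (rule mix_mono(1)[OF w12 incr incr]) (use that edge_flow_bounds[OF g] edge_flow_bounds[OF h] in auto)
  have "\<forall>e\<in>E. a e * (edge_flow P g e - edge_flow P h e) = 0"
    using sum_nonneg_eq_0_iff[OF finE, of "\<lambda>e. a e * (edge_flow P g e - edge_flow P h e)"] S nn
    by (meson antisym sum_nonneg)
  show ?thesis
  proof
    fix e assume e: "e \<in> E"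
    have "a e * (edge_flow P g e - edge_flow P h e) = 0" using \<open>\<forall>e\<in>E. _\<close> e by blast
    then show "edge_flow P g e = edge_flow P h e"
      unfolding a_def ec_def
      using mix_mono(2)[OF w12 incr[of 1 e] incr[of 2 e] edge_flow_bounds(1)[OF h] edge_flow_bounds(1)[OF g]] e by auto
  qed
qed



lemma sum_delta_bool:
  assumes "finite P" "r \<in> P"
  shows "(\<Sum>q\<in>P. of_bool (q = r) * X q) = (X r :: real)"
proof -
  have "(\<Sum>q\<in>P. of_bool (q = r) * X q) = (\<Sum>q\<in>P. if q = r then X q else 0)"
    by (rule sum.cong) auto
  also have "\<dots> = X r" using assms by (simp add: sum.delta')
  finally show ?thesis .
qed

lemma smono_le:
  assumes "strict_mono_on {0..} (c :: real \<Rightarrow> real)" "0 \<le> t" "t \<le> z"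
  shows "c t \<le> c z"
proof (cases "t = z")
  case False
  then have "t < z" using assms by simp
  then show ?thesis using strict_mono_onD[OF assms(1), of t z] assms by force
qed simp

lemma int_bounds:
  assumes cont: "continuous_on {0..} (c :: real \<Rightarrow> real)" and mono: "strict_mono_on {0..} c"
    and a: "0 \<le> a" "a \<le> b"
  shows "(b - a) * c a \<le> integral {a..b} c" "integral {a..b} c \<le> (b - a) * c b"
proof -
  have ci: "c integrable_on {a..b}"
    by (rule integrable_continuous_interval, rule continuous_on_subset[OF cont]) (use a in auto)
  have "integral {a..b} (\<lambda>_. c a) \<le> integral {a..b} c"
    by (rule integral_le) (use ci smono_le[OF mono] a in auto)
  then show "(b - a) * c a \<le> integral {a..b} c" using a by (simp add: content_real)
  have "integral {a..b} c \<le> integral {a..b} (\<lambda>_. c b)"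
    by (rule integral_le) (use ci smono_le[OF mono] a in auto)
  then show "integral {a..b} c \<le> (b - a) * c b" using a by (simp add: content_real)
qed

lemma F_step:
  assumes cont: "continuous_on {0..} (c :: real \<Rightarrow> real)" and mono: "strict_mono_on {0..} c"
    and y: "0 \<le> y" and z: "0 \<le> z"
  shows "integral {0..z} c - integral {0..y} c \<le> (z - y) * c z"
proof (cases "y \<le> z")
  case True
  have ci: "c integrable_on {0..z}"
    by (rule integrable_continuous_interval, rule continuous_on_subset[OF cont]) auto
  have "integral {0..y} c + integral {y..z} c = integral {0..z} c"
    by (rule Henstock_Kurzweil_Integration.integral_combine) (use y True ci in auto)
  then show ?thesis using int_bounds(2)[OF cont mono y True] by simp
next
  case False
  have ci: "c integrable_on {0..y}"
    by (rule integrable_continuous_interval, rule continuous_on_subset[OF cont]) auto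
  have "integral {0..z} c + integral {z..y} c = integral {0..y} c"
    by (rule Henstock_Kurzweil_Integration.integral_combine) (use z False ci in auto)
  moreover have "(y - z) * c z \<le> integral {z..y} c" using int_bounds(1)[OF cont mono z, of y] False by simp
  ultimately show ?thesis by (simp add: algebra_simps)
qed

lemma cont_ef: "continuous_on X (\<lambda>h. edge_flow P h e)"
  unfolding edge_flow_def
  by (intro continuous_on_sum, rule continuous_on_subset[OF continuous_on_product_coordinates]) simp

lemma exists_WE1:
  assumes finP: "finite P" and ne: "P \<noteq> {}" and subE: "\<And>p. p\<in>P \<Longrightarrow> path_edges p \<subseteq> E"
    and finE: "finite E"
    and cont1: "\<And>e. e\<in>E \<Longrightarrow> continuous_on {0..} (C 1 e)"
    and mono1: "\<And>e. e\<in>E \<Longrightarrow> strict_mono_on {0..} (C 1 e)"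
  shows "\<exists>g. g \<in> wardrop_eq 2 C P (point_dist 1)"
proof -
  define S where "S = feasible_flows P"
  define B where "B p = (if p \<in> P then {0..1} else {0::real})" for p
  have S_eq: "S = PiE UNIV B \<inter> {h. sum h P = 1}"
  proof (intro set_eqI iffI)
    fix h assume h: "h \<in> S"
    have "h p \<in> B p" for p
    proof (cases "p \<in> P")
      case True
      have "h p \<le> sum h P"
        by (rule member_le_sum) (use h True finP in \<open>auto simp: S_def feasible_flows_def\<close>)
      then show ?thesis using h True by (auto simp: S_def feasible_flows_def B_def)
    qed (use h in \<open>auto simp: S_def feasible_flows_def B_def\<close>)
    then show "h \<in> PiE UNIV B \<inter> {h. sum h P = 1}" using h by (auto simp: S_def feasible_flows_def)
  next
    fix h assume "h \<in> PiE UNIV B \<inter> {h. sum h P = 1}"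
    then show "h \<in> S" by (auto simp: S_def feasible_flows_def B_def PiE_iff split: if_splits)
  qed
  have cB: "compact (PiE UNIV B)"
    using compactin_PiE[of "\<lambda>_. euclidean" UNIV B] by (simp add: euclidean_product_topology B_def)
  have clS: "closed {h::'a list \<Rightarrow> real. sum h P = 1}"
    by (rule closed_Collect_eq) (intro continuous_on_sum continuous_on_const continuous_on_product_coordinates)+
  have cS: "compact S" unfolding S_eq using cB clS by (rule compact_Int_closed)
  obtain p0 where p0: "p0 \<in> P" using ne by auto
  have neS: "S \<noteq> {}"
  proof -
    have "(\<lambda>q. if q = p0 then 1 else 0) \<in> S"
      using p0 finP by (auto simp: S_def feasible_flows_def sum.delta')
    then show ?thesis by auto
  qed
  define F where "F e y = integral {0..y} (C 1 e)" for e y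
  define \<Phi> where "\<Phi> h = (\<Sum>e\<in>E. F e (edge_flow P h e))" for h
  have contF: "continuous_on {0..1} (F e)" if "e \<in> E" for e
    unfolding F_def
    by (rule indefinite_integral_continuous_1, rule integrable_continuous_interval,
        rule continuous_on_subset[OF cont1[OF that]]) auto
  have cPhi: "continuous_on S \<Phi>"
    unfolding \<Phi>_def
  proof (rule continuous_on_sum)
    fix e assume e: "e \<in> E"
    show "continuous_on S (\<lambda>h. F e (edge_flow P h e))"
      by (rule continuous_on_compose2[OF contF[OF e] cont_ef])
         (auto simp: S_def intro: edge_flow_bounds)
  qed
  obtain g where gS: "g \<in> S" and gmin: "\<And>h. h \<in> S \<Longrightarrow> \<Phi> g \<le> \<Phi> h"
    using continuous_attains_inf[OF cS neS cPhi] by blast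
  have "\<forall>p\<in>P. g p > 0 \<longrightarrow> (\<forall>r\<in>P. path_cost C 1 P g p \<le> path_cost C 1 P g r)"
  proof (intro ballI impI, rule ccontr)
    fix p r assume p: "p \<in> P" and gp: "g p > 0" and r: "r \<in> P"
      and nle: "\<not> path_cost C 1 P g p \<le> path_cost C 1 P g r"
    then have rp: "r \<noteq> p" by auto
    define h where "h \<epsilon> = (\<lambda>q. g q + \<epsilon> * (of_bool (q = r) - of_bool (q = p)))" for \<epsilon> :: real
    have hS: "h \<epsilon> \<in> S" if "\<epsilon> \<in> {0..g p}" for \<epsilon>
    proof -
      have "sum (h \<epsilon>) P = sum g P + \<epsilon> * ((\<Sum>q\<in>P. of_bool (q = r) * 1) - (\<Sum>q\<in>P. of_bool (q = p) * 1))"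
        unfolding h_def by (simp add: sum.distrib sum_distrib_left sum_subtractf algebra_simps)
      also have "\<dots> = 1" using sum_delta_bool[OF finP r, of "\<lambda>_. 1"] sum_delta_bool[OF finP p, of "\<lambda>_. 1"]
          gS by (simp add: S_def feasible_flows_def)
      finally have "sum (h \<epsilon>) P = 1" .
      moreover have "h \<epsilon> q \<ge> 0" if "q \<in> P" for q
        using gS that \<open>\<epsilon> \<in> {0..g p}\<close> rp by (auto simp: h_def S_def feasible_flows_def)
      moreover have "h \<epsilon> q = 0" if "q \<notin> P" for q
        using gS that p r by (auto simp: h_def S_def feasible_flows_def)
      ultimately show ?thesis by (auto simp: S_def feasible_flows_def)
    qed
    have h0: "h 0 = g" by (simp add: h_def)
    define D where "D \<epsilon> = path_cost C 1 P (h \<epsilon>) r - path_cost C 1 P (h \<epsilon>) p" for \<epsilon>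
    have D0: "D 0 < 0" using nle by (simp add: D_def h0)
    have cpc: "continuous_on {0..g p} (\<lambda>\<epsilon>. path_cost C 1 P (h \<epsilon>) q)" if q: "q \<in> P" for q
      unfolding path_cost_def
    proof (rule continuous_on_sum)
      fix e assume e: "e \<in> path_edges q"
      then have eE: "e \<in> E" using subE[OF q] by auto
      have ce: "continuous_on {0..g p} (\<lambda>\<epsilon>. edge_flow P (h \<epsilon>) e)"
        unfolding edge_flow_def h_def by (intro continuous_intros)
      show "continuous_on {0..g p} (\<lambda>\<epsilon>. C 1 e (edge_flow P (h \<epsilon>) e))"
        by (rule continuous_on_compose2[OF cont1[OF eE] ce])
           (use hS in \<open>auto simp: S_def intro: edge_flow_bounds\<close>)
    qed
    have cD: "continuous_on {0..g p} D" unfolding D_def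
      by (intro continuous_on_diff cpc p r)
    obtain \<delta> where \<delta>: "\<delta> > 0" "\<And>x. x \<in> {0..g p} \<Longrightarrow> dist x 0 < \<delta> \<Longrightarrow> dist (D x) (D 0) < - D 0"
      using cD[unfolded continuous_on_iff] D0 gp by (metis atLeastAtMost_iff less_eq_real_def neg_0_less_iff_less)
    define \<epsilon> where "\<epsilon> = min (g p) (\<delta> / 2)"
    have \<epsilon>: "\<epsilon> > 0" "\<epsilon> \<in> {0..g p}" using \<delta> gp by (auto simp: \<epsilon>_def)
    have "dist (D \<epsilon>) (D 0) < - D 0" using \<delta>(2)[OF \<epsilon>(2)] \<epsilon> \<delta> by (auto simp: \<epsilon>_def dist_real_def)
    then have De: "D \<epsilon> < 0" by (simp add: dist_real_def)
    define he where "he = h \<epsilon>"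
    have heS: "he \<in> S" using hS[OF \<epsilon>(2)] by (simp add: he_def)
    have "\<Phi> he - \<Phi> g = (\<Sum>e\<in>E. F e (edge_flow P he e) - F e (edge_flow P g e))"
      by (simp add: \<Phi>_def sum_subtractf)
    also have "\<dots> \<le> (\<Sum>e\<in>E. C 1 e (edge_flow P he e) * edge_flow P (\<lambda>q. he q - g q) e)"
    proof (rule sum_mono)
      fix e assume e: "e \<in> E"
      have "F e (edge_flow P he e) - F e (edge_flow P g e) \<le> (edge_flow P he e - edge_flow P g e) * C 1 e (edge_flow P he e)"
        unfolding F_def
        by (rule F_step[OF cont1[OF e] mono1[OF e]])
           (use heS gS in \<open>auto simp: S_def intro: edge_flow_bounds\<close>)
      then show "F e (edge_flow P he e) - F e (edge_flow P g e) \<le> C 1 e (edge_flow P he e) * edge_flow P (\<lambda>q. he q - g q) e"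
        by (simp add: edge_flow_def sum_subtractf mult.commute)
    qed
    also have "\<dots> = (\<Sum>q\<in>P. (he q - g q) * path_cost C 1 P he q)"
      unfolding path_cost_def by (rule pairing[OF finP subE finE, symmetric])
    also have "\<dots> = (\<Sum>q\<in>P. \<epsilon> * (of_bool (q = r) * path_cost C 1 P he q) - \<epsilon> * (of_bool (q = p) * path_cost C 1 P he q))"
      by (rule sum.cong) (auto simp: he_def h_def algebra_simps)
    also have "\<dots> = \<epsilon> * D \<epsilon>"
      using sum_delta_bool[OF finP r, of "path_cost C 1 P he"] sum_delta_bool[OF finP p, of "path_cost C 1 P he"]
      by (simp add: sum_subtractf sum_distrib_left[symmetric] D_def he_def algebra_simps)
    also have "\<dots> < 0" using \<epsilon>(1) De by (simp add: mult_pos_neg)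
    finally have "\<Phi> he < \<Phi> g" by simp
    then show False using gmin[OF heS] by simp
  qed
  then have "g \<in> wardrop_eq 2 C P (point_dist 1)"
    using gS unfolding wardrop_eq_def exp_cost_pd1 S_def by blast
  then show ?thesis by blast
qed



lemma two_by_two:
  fixes a b :: real
  assumes "x1 * a + x2 * b = 0" "y1 * a + y2 * b = 0" "x1 + x2 = 1" "y1 + y2 = 1" "x1 \<noteq> y1"
  shows "a = 0" "b = 0"
proof -
  have x2: "x2 = 1 - x1" and y2: "y2 = 1 - y1" using assms(3,4) by simp_all
  have e1: "x1 * (a - b) + b = x1 * a + x2 * b" by (simp add: x2 algebra_simps)
  have e2: "y1 * (a - b) + b = y1 * a + y2 * b" by (simp add: y2 algebra_simps)
  have h1: "x1 * (a - b) + b = 0" using e1 assms(1) by simp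
  have h2: "y1 * (a - b) + b = 0" using e2 assms(2) by simp
  have "(x1 - y1) * (a - b) = 0" using h1 h2 by (simp add: algebra_simps)
  then have "a = b" using assms(5) by simp
  then show "a = 0" "b = 0" using h1 by auto
qed

theorem lemma7:
  fixes E :: "('v \<times> 'v) set" and vo vd :: 'v
    and C :: "nat \<Rightarrow> ('v \<times> 'v) \<Rightarrow> real \<Rightarrow> real"
    and \<phi> :: "nat \<Rightarrow> real"
  defines "P \<equiv> od_paths E vo vd"
  assumes finE: "finite E"
    and cont: "\<And>s e. s \<in> {1..2} \<Longrightarrow> e \<in> E \<Longrightarrow> continuous_on {0..} (C s e)"
    and incr: "\<And>s e. s \<in> {1..2} \<Longrightarrow> e \<in> E \<Longrightarrow> strict_mono_on {0..} (C s e)"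
    and nonneg: "\<And>s e x. s \<in> {1..2} \<Longrightarrow> e \<in> E \<Longrightarrow> x \<ge> 0 \<Longrightarrow> C s e x \<ge> 0"
    and phi: "\<phi> \<in> prob_simplex 2"
    and inf: "\<exists>f \<in> wardrop_eq 2 C P \<phi>. f \<in> informative_flows C P"
  shows "\<forall>fh \<in> wardrop_eq 2 C P \<phi>.
     {\<psi> \<in> prob_simplex 2.
        (\<forall>p\<in>P. \<forall>r\<in>P. fh p > 0 \<longrightarrow> fh r > 0 \<longrightarrow>
           (\<Sum>s=1..2. (path_cost C s P fh p - path_cost C s P fh r) * \<psi> s) = 0) \<and>
        (\<forall>p\<in>P. \<forall>r\<in>P. fh p > 0 \<longrightarrow> fh r = 0 \<longrightarrow>
           (\<Sum>s=1..2. (path_cost C s P fh p - path_cost C s P fh r) * \<psi> s) \<le> 0)}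
     = {\<phi>}"
proof
  fix fh assume fhW: "fh \<in> wardrop_eq 2 C P \<phi>"
  from inf obtain f where fW: "f \<in> wardrop_eq 2 C P \<phi>" and fI: "f \<in> informative_flows C P" by blast
  have fF: "f \<in> feasible_flows P" using fW by (simp add: wardrop_eq_def)
  have fhF: "fh \<in> feasible_flows P" using fhW by (simp add: wardrop_eq_def)
  have finP: "finite P" using feasible_finite[OF fF] .
  have subE: "\<And>p. p\<in>P \<Longrightarrow> path_edges p \<subseteq> E" unfolding P_def by (rule od_paths_edges)
  have fhWE: "\<And>p r. p \<in> P \<Longrightarrow> fh p > 0 \<Longrightarrow> r \<in> P \<Longrightarrow> exp_cost 2 C \<phi> P fh p \<le> exp_cost 2 C \<phi> P fh r"
    using fhW by (auto simp: wardrop_eq_def)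
  have fWE: "\<And>p r. p \<in> P \<Longrightarrow> f p > 0 \<Longrightarrow> r \<in> P \<Longrightarrow> exp_cost 2 C \<phi> P f p \<le> exp_cost 2 C \<phi> P f r"
    using fW by (auto simp: wardrop_eq_def)
  have fhnn: "\<And>q. q \<in> P \<Longrightarrow> fh q \<ge> 0" using fhF by (auto simp: feasible_flows_def)
  have fnn: "\<And>q. q \<in> P \<Longrightarrow> f q \<ge> 0" using fF by (auto simp: feasible_flows_def)
  have fsum: "sum f P = 1" "sum fh P = 1" using fF fhF by (auto simp: feasible_flows_def)
  have ph: "\<phi> 1 \<ge> 0" "\<phi> 2 \<ge> 0" "\<phi> 1 + \<phi> 2 = 1" using simplex2[OF phi] by auto
  define k where "k s q = path_cost C s P fh q" for s q
  show "{\<psi> \<in> prob_simplex 2.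
        (\<forall>p\<in>P. \<forall>r\<in>P. fh p > 0 \<longrightarrow> fh r > 0 \<longrightarrow>
           (\<Sum>s=1..2. (path_cost C s P fh p - path_cost C s P fh r) * \<psi> s) = 0) \<and>
        (\<forall>p\<in>P. \<forall>r\<in>P. fh p > 0 \<longrightarrow> fh r = 0 \<longrightarrow>
           (\<Sum>s=1..2. (path_cost C s P fh p - path_cost C s P fh r) * \<psi> s) \<le> 0)} = {\<phi>}"
  proof (intro set_eqI iffI)
    fix \<psi> assume "\<psi> \<in> {\<phi>}"
    then have \<psi>: "\<psi> = \<phi>" by simp
    have A: "(\<Sum>s=1..2. (path_cost C s P fh p - path_cost C s P fh r) * \<psi> s) = exp_cost 2 C \<phi> P fh p - exp_cost 2 C \<phi> P fh r" for p r
      unfolding sum12 exp_cost2 \<psi> by (simp add: algebra_simps)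
    show "\<psi> \<in> {\<psi> \<in> prob_simplex 2.
        (\<forall>p\<in>P. \<forall>r\<in>P. fh p > 0 \<longrightarrow> fh r > 0 \<longrightarrow>
           (\<Sum>s=1..2. (path_cost C s P fh p - path_cost C s P fh r) * \<psi> s) = 0) \<and>
        (\<forall>p\<in>P. \<forall>r\<in>P. fh p > 0 \<longrightarrow> fh r = 0 \<longrightarrow>
           (\<Sum>s=1..2. (path_cost C s P fh p - path_cost C s P fh r) * \<psi> s) \<le> 0)}"
      unfolding mem_Collect_eq A using phi fhWE \<psi> by (auto intro: antisym)
  next
    fix \<psi> assume "\<psi> \<in> {\<psi> \<in> prob_simplex 2.
        (\<forall>p\<in>P. \<forall>r\<in>P. fh p > 0 \<longrightarrow> fh r > 0 \<longrightarrow>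
           (\<Sum>s=1..2. (path_cost C s P fh p - path_cost C s P fh r) * \<psi> s) = 0) \<and>
        (\<forall>p\<in>P. \<forall>r\<in>P. fh p > 0 \<longrightarrow> fh r = 0 \<longrightarrow>
           (\<Sum>s=1..2. (path_cost C s P fh p - path_cost C s P fh r) * \<psi> s) \<le> 0)}"
    then have \<psi>S: "\<psi> \<in> prob_simplex 2"
      and c1: "\<And>p r. p\<in>P \<Longrightarrow> r\<in>P \<Longrightarrow> fh p > 0 \<Longrightarrow> fh r > 0 \<Longrightarrow> (k 1 p - k 1 r) * \<psi> 1 + (k 2 p - k 2 r) * \<psi> 2 = 0"
      and c2: "\<And>p r. p\<in>P \<Longrightarrow> r\<in>P \<Longrightarrow> fh p > 0 \<Longrightarrow> fh r = 0 \<Longrightarrow> (k 1 p - k 1 r) * \<psi> 1 + (k 2 p - k 2 r) * \<psi> 2 \<le> 0"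
      unfolding sum12 k_def by auto
    have ps: "\<psi> 1 \<ge> 0" "\<psi> 2 \<ge> 0" "\<psi> 1 + \<psi> 2 = 1" using simplex2[OF \<psi>S] by auto
    show "\<psi> \<in> {\<phi>}"
    proof (rule ccontr)
      assume "\<psi> \<notin> {\<phi>}"
      then have ne1: "\<phi> 1 \<noteq> \<psi> 1" using simplex2_neq[OF phi \<psi>S] by auto
      
      have ef: "\<forall>e\<in>E. edge_flow P f e = edge_flow P fh e"
      proof (rule uniq[OF finP subE finE incr phi fF fhF])
        have "(\<Sum>p\<in>P. f p * exp_cost 2 C \<phi> P f p) \<le> (\<Sum>p\<in>P. fh p * exp_cost 2 C \<phi> P f p)"
          by (rule we_ineq[OF fW fhF])
        moreover have "(\<Sum>p\<in>P. fh p * exp_cost 2 C \<phi> P fh p) \<le> (\<Sum>p\<in>P. f p * exp_cost 2 C \<phi> P fh p)"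
          by (rule we_ineq[OF fhW fF])
        ultimately show "(\<Sum>p\<in>P. (f p - fh p) * (exp_cost 2 C \<phi> P f p - exp_cost 2 C \<phi> P fh p)) \<le> 0"
          unfolding sum_expand by linarith
      qed
      have kf: "\<And>s q. q \<in> P \<Longrightarrow> path_cost C s P f q = k s q"
        unfolding k_def using pc_eq[OF ef subE] by blast
      obtain p0 where p0: "p0 \<in> P" "fh p0 > 0" using feasible_pos[OF fhF] .
      define \<alpha> where "\<alpha> s = k s p0" for s
      define L\<phi> where "L\<phi> q = \<phi> 1 * (k 1 q - \<alpha> 1) + \<phi> 2 * (k 2 q - \<alpha> 2)" for q
      define L\<psi> where "L\<psi> q = \<psi> 1 * (k 1 q - \<alpha> 1) + \<psi> 2 * (k 2 q - \<alpha> 2)" for q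
      have Lphi: "L\<phi> q \<ge> 0" if "q \<in> P" for q
        using fhWE[OF p0 that] unfolding exp_cost2 L\<phi>_def \<alpha>_def k_def by (simp add: algebra_simps)
      have Lphi0: "L\<phi> q = 0" if "q \<in> P" "fh q > 0" for q
        using fhWE[OF that p0(1)] Lphi[OF that(1)] unfolding exp_cost2 L\<phi>_def \<alpha>_def k_def by (simp add: algebra_simps)
      have Lpsi: "L\<psi> q \<ge> 0" if "q \<in> P" for q
      proof (cases "fh q > 0")
        case True
        show ?thesis using c1[OF that p0(1) True p0(2)] unfolding L\<psi>_def \<alpha>_def by (simp add: algebra_simps)
      next
        case False
        then have "fh q = 0" using fhnn[OF that] by simp
        then show ?thesis using c2[OF p0(1) that p0(2)] unfolding L\<psi>_def \<alpha>_def by (simp add: algebra_simps)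
      qed
      have Lpsi0: "L\<psi> q = 0" if "q \<in> P" "fh q > 0" for q
        using c1[OF that(1) p0(1) that(2) p0(2)] unfolding L\<psi>_def \<alpha>_def by (simp add: algebra_simps)
      have fhk: "k 1 q = \<alpha> 1 \<and> k 2 q = \<alpha> 2" if "q \<in> P" "fh q > 0" for q
        using two_by_two[OF Lphi0[OF that, unfolded L\<phi>_def] Lpsi0[OF that, unfolded L\<psi>_def] ph(3) ps(3) ne1]
        by simp
      have sum_fh: "(\<Sum>q\<in>P. fh q * k s q) = \<alpha> s" if "s = 1 \<or> s = 2" for s
      proof -
        have "(\<Sum>q\<in>P. fh q * k s q) = (\<Sum>q\<in>P. fh q * \<alpha> s)"
        proof (rule sum.cong[OF refl])
          fix q assume q: "q \<in> P"
          show "fh q * k s q = fh q * \<alpha> s"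
          proof (cases "fh q > 0")
            case True then show ?thesis using fhk[OF q True] that by auto
          next
            case False then have "fh q = 0" using fhnn[OF q] by simp
            then show ?thesis by simp
          qed
        qed
        also have "\<dots> = \<alpha> s" using fsum by (simp add: sum_distrib_right[symmetric])
        finally show ?thesis .
      qed
      have sum_f: "(\<Sum>q\<in>P. f q * k s q) = (\<Sum>q\<in>P. fh q * k s q)" for s
      proof -
        have "(\<Sum>q\<in>P. f q * k s q) = (\<Sum>e\<in>E. C s e (edge_flow P fh e) * edge_flow P f e)"
          unfolding k_def path_cost_def by (rule pairing[OF finP subE finE])
        also have "\<dots> = (\<Sum>e\<in>E. C s e (edge_flow P fh e) * edge_flow P fh e)"
          using ef by simp
        also have "\<dots> = (\<Sum>q\<in>P. fh q * k s q)"
          unfolding k_def path_cost_def by (rule pairing[OF finP subE finE, symmetric])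
        finally show ?thesis .
      qed
      have sdiff: "(\<Sum>q\<in>P. f q * (k s q - \<alpha> s)) = 0" if "s = 1 \<or> s = 2" for s
      proof -
        have "(\<Sum>q\<in>P. f q * (k s q - \<alpha> s)) = (\<Sum>q\<in>P. f q * k s q) - (\<Sum>q\<in>P. f q) * \<alpha> s"
          by (simp add: algebra_simps sum_subtractf sum_distrib_left)
        then show ?thesis using sum_f[of s] sum_fh[OF that] fsum by simp
      qed
      have "(\<Sum>q\<in>P. f q * L\<psi> q) = \<psi> 1 * (\<Sum>q\<in>P. f q * (k 1 q - \<alpha> 1)) + \<psi> 2 * (\<Sum>q\<in>P. f q * (k 2 q - \<alpha> 2))"
      proof -
        have "(\<Sum>q\<in>P. f q * L\<psi> q) = (\<Sum>q\<in>P. \<psi> 1 * (f q * (k 1 q - \<alpha> 1)) + \<psi> 2 * (f q * (k 2 q - \<alpha> 2)))"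
          by (rule sum.cong) (auto simp: L\<psi>_def algebra_simps)
        then show ?thesis by (simp add: sum.distrib sum_distrib_left)
      qed
      then have sL: "(\<Sum>q\<in>P. f q * L\<psi> q) = 0" using sdiff by simp
      have fL: "L\<psi> q = 0" if "q \<in> P" "f q > 0" for q
      proof -
        have nn: "\<And>q. q \<in> P \<Longrightarrow> 0 \<le> f q * L\<psi> q" using fnn Lpsi by (simp add: mult_nonneg_nonneg)
        have "\<forall>q\<in>P. f q * L\<psi> q = 0"
          using sum_nonneg_eq_0_iff[OF finP nn] sL by simp
        then show ?thesis using that by auto
      qed
      have fLphi: "L\<phi> q = 0" if "q \<in> P" "f q > 0" for q
        using fWE[OF that p0(1)] Lphi[OF that(1)] kf[OF that(1)] kf[OF p0(1)]
        unfolding exp_cost2 L\<phi>_def \<alpha>_def by (simp add: algebra_simps)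
      have fk1: "k 1 q = \<alpha> 1" if "q \<in> P" "f q > 0" for q
        using two_by_two(1)[OF fLphi[OF that, unfolded L\<phi>_def] fL[OF that, unfolded L\<psi>_def] ph(3) ps(3) ne1]
        by simp
      
      have "f \<notin> wardrop_eq 2 C P (point_dist 1)" using fI by (simp add: informative_flows_def)
      then have "\<not> (\<forall>p\<in>P. f p > 0 \<longrightarrow> (\<forall>r\<in>P. path_cost C 1 P f p \<le> path_cost C 1 P f r))"
        using fF unfolding wardrop_eq_def exp_cost_pd1 mem_Collect_eq by blast
      then obtain p r where pr: "p \<in> P" "f p > 0" "r \<in> P" "path_cost C 1 P f r < path_cost C 1 P f p"
        by (auto simp: not_le)
      have kr: "k 1 r < \<alpha> 1" using pr kf fk1[OF pr(1,2)] by simp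
      
      have neP: "P \<noteq> {}" using pr(1) by auto
      have c1': "\<And>e. e\<in>E \<Longrightarrow> continuous_on {0..} (C 1 e)" using cont by simp
      have m1': "\<And>e. e\<in>E \<Longrightarrow> strict_mono_on {0..} (C 1 e)" using incr by simp
      obtain g where gW: "g \<in> wardrop_eq 2 C P (point_dist 1)"
        using exists_WE1[where P=P and E=E and C=C, OF finP neP subE finE c1' m1'] by blast
      have gF: "g \<in> feasible_flows P" using gW by (simp add: wardrop_eq_def)
      have gnn: "\<And>q. q \<in> P \<Longrightarrow> g q \<ge> 0" using gF by (auto simp: feasible_flows_def)
      have gsupp: "f q > 0" if "q \<in> P" "g q > 0" for q
      proof -
        have "q \<in> used_routes 2 C P (point_dist 1)" using that gW by (auto simp: used_routes_def)
        then show ?thesis using fI by (auto simp: informative_flows_def)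
      qed
      have suma: "(\<Sum>q\<in>P. h q * path_cost C 1 P f q) = \<alpha> 1"
        if "h \<in> feasible_flows P" "\<And>q. q \<in> P \<Longrightarrow> h q > 0 \<Longrightarrow> f q > 0" for h
      proof -
        have "(\<Sum>q\<in>P. h q * path_cost C 1 P f q) = (\<Sum>q\<in>P. h q * \<alpha> 1)"
        proof (rule sum.cong[OF refl])
          fix q assume q: "q \<in> P"
          show "h q * path_cost C 1 P f q = h q * \<alpha> 1"
          proof (cases "h q > 0")
            case True then show ?thesis using fk1[OF q that(2)[OF q True]] kf[OF q] by simp
          next
            case False then have "h q = 0" using that(1) q by (force simp: feasible_flows_def)
            then show ?thesis by simp
          qed
        qed
        also have "\<dots> = \<alpha> 1" using that(1) by (simp add: feasible_flows_def sum_distrib_right[symmetric])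
        finally show ?thesis .
      qed
      have efg: "\<forall>e\<in>E. edge_flow P g e = edge_flow P f e"
      proof (rule uniq[OF finP subE finE incr point_dist1 gF fF])
        have "(\<Sum>p\<in>P. g p * exp_cost 2 C (point_dist 1) P g p) \<le> (\<Sum>p\<in>P. f p * exp_cost 2 C (point_dist 1) P g p)"
          by (rule we_ineq[OF gW fF])
        moreover have "(\<Sum>q\<in>P. g q * path_cost C 1 P f q) = \<alpha> 1" by (rule suma[OF gF gsupp])
        moreover have "(\<Sum>q\<in>P. f q * path_cost C 1 P f q) = \<alpha> 1" by (rule suma[OF fF])
        ultimately show "(\<Sum>p\<in>P. (g p - f p) * (exp_cost 2 C (point_dist 1) P g p - exp_cost 2 C (point_dist 1) P f p)) \<le> 0"
          unfolding sum_expand exp_cost_pd1 by linarith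
      qed
      have kg: "\<And>q. q \<in> P \<Longrightarrow> path_cost C 1 P g q = k 1 q"
        using pc_eq[OF efg subE] kf by metis
      obtain q0 where q0: "q0 \<in> P" "g q0 > 0" using feasible_pos[OF gF] .
      have "path_cost C 1 P g q0 \<le> path_cost C 1 P g r"
        using gW q0 pr(3) unfolding wardrop_eq_def exp_cost_pd1 by blast
      then have "\<alpha> 1 \<le> k 1 r" using kg[OF q0(1)] kg[OF pr(3)] fk1[OF q0(1) gsupp[OF q0]] by simp
      then show False using kr by simp
    qed
  qed
qed

end
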